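(* Let $d\ge3$, $a=d-1$, $n\ge2$, and write $q_k=1+a+\cdots+a^{k-1}$. Then the sandpile group of $T_n$ satisfies $$SP(T_n)\cong \bigoplus_{k=2}^{n-1}\mathbb{Z}_{q_k}^{\,a^{n-1-k}(a-1)}\ \oplus\ \mathbb{Z}_{q_n},$$ i.e. $SP(T_n)\cong\mathbb{Z}_{1+a}^{a^{n-3}(a-1)}\oplus\mathbb{Z}_{1+a+a^2}^{a^{n-4}(a-1)}\oplus\cdots\oplus\mathbb{Z}_{1+a+\cdots+a^{n-2}}^{a-1}\oplus\mathbb{Z}_{1+a+\cdots+a^{n-1}}$, where $\mathbb{Z}_p^q$ denotes the direct sum of $q$ copies of $\mathbb{Z}/p\mathbb{Z}$. For example, for $d=3$, $SP(T_n)\cong\mathbb{Z}_3^{2^{n-3}}\oplus\mathbb{Z}_7^{2^{n-4}}\oplus\cdots\oplus\mathbb{Z}_{2^{n-1}-1}\oplus\mathbb{Z}_{2^n-1}$.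
   Context: $T_n$: take the rooted tree in which every vertex at depth $0,\dots,n-2$ has exactly $d-1$ children (so the leaves are at depth $n-1$); identify all leaves into a single sink vertex $s$ (keeping multiple edges), and add one edge joining the root to $s$. Thus every non-sink vertex has degree $d$. Sandpile group of a finite graph $G$ with vertex set $V$ and sink $s$: $SP(G)=\mathbb{Z}^V/L$, where $L$ is the subgroup generated by the indicator vector of $s$ and the vectors $\Delta_x$ ($x\in V$), with $\Delta_x$ having entry equal to the number of edges between $x$ and $y$ at each $y\ne x$ and entry $-\deg(x)$ at $x$. *)

theory Defs
  imports "HOL-Algebra.Algebra"
begin

text \<open>A finite multigraph is given by a finite vertex set V and a symmetric
edge-multiplicity function em (em x y = number of edges between x and y).
The degree of x counts edges to other vertices (our graphs have no loops).\<close>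

definition mg_deg :: "'v set \<Rightarrow> ('v \<Rightarrow> 'v \<Rightarrow> nat) \<Rightarrow> 'v \<Rightarrow> nat" where
  "mg_deg V em x = (\<Sum>y\<in>V - {x}. em x y)"

definition ZV :: "'v set \<Rightarrow> ('v \<Rightarrow> int) monoid" where
  "ZV V = sum_group V (\<lambda>_. integer_group)"

definition laplace_vec :: "'v set \<Rightarrow> ('v \<Rightarrow> 'v \<Rightarrow> nat) \<Rightarrow> 'v \<Rightarrow> ('v \<Rightarrow> int)" where
  "laplace_vec V em x =
     (\<lambda>y. if y \<in> V then (if y = x then - int (mg_deg V em x) else int (em x y)) else undefined)"

definition indicator_vec :: "'v set \<Rightarrow> 'v \<Rightarrow> ('v \<Rightarrow> int)" where
  "indicator_vec V s = (\<lambda>y. if y \<in> V then (if y = s then 1 else 0) else undefined)"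

definition sandpile_lattice :: "'v set \<Rightarrow> ('v \<Rightarrow> 'v \<Rightarrow> nat) \<Rightarrow> 'v \<Rightarrow> ('v \<Rightarrow> int) set" where
  "sandpile_lattice V em s =
     generate (ZV V) (insert (indicator_vec V s) (laplace_vec V em ` V))"

definition sandpile_group where
  "sandpile_group V em s = ZV V Mod sandpile_lattice V em s"

text \<open>Non-sink vertices are Some w, where w is a word over {0..<a} (a = d-1) of
length at most n-2 (the vertex at depth length w; the root is Some []).
Children of Some w are Some (w @ [i]).  The leaves (depth n-1) are all
identified with the sink None; the extra root--sink edge is added.\<close>

definition T_vertices :: "nat \<Rightarrow> nat \<Rightarrow> nat list option set" where
  "T_vertices d n =
     insert None (Some ` {w. length w \<le> n - 2 \<and> (\<forall>i\<in>set w. i < d - 1)})"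

fun T_mult :: "nat \<Rightarrow> nat \<Rightarrow> nat list option \<Rightarrow> nat list option \<Rightarrow> nat" where
  "T_mult d n (Some u) (Some w) =
     (if (\<exists>i. w = u @ [i]) \<or> (\<exists>i. u = w @ [i]) then 1 else 0)"
| "T_mult d n (Some u) None =
     (if length u = n - 2 then d - 1 else 0) + (if u = [] then 1 else 0)"
| "T_mult d n None (Some w) =
     (if length w = n - 2 then d - 1 else 0) + (if w = [] then 1 else 0)"
| "T_mult d n None None = 0"

definition SP_T :: "nat \<Rightarrow> nat \<Rightarrow> (nat list option \<Rightarrow> int) set monoid" where
  "SP_T d n = sandpile_group (T_vertices d n) (T_mult d n) None"

definition qsum :: "nat \<Rightarrow> nat \<Rightarrow> nat" where
  "qsum a k = (\<Sum>i<k. a ^ i)"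

definition target_index :: "nat \<Rightarrow> nat \<Rightarrow> (nat \<times> nat) set" where
  "target_index a n =
     insert (n, 0) {(k, j). 2 \<le> k \<and> k \<le> n - 1 \<and> j < a ^ (n - 1 - k) * (a - 1)}"

definition target_group :: "nat \<Rightarrow> nat \<Rightarrow> (nat \<times> nat \<Rightarrow> int) monoid" where
  "target_group a n =
     sum_group (target_index a n) (\<lambda>(k, j). integer_mod_group (qsum a k))"

end

theory Submission
  imports Defs "HOL-Library.Sublist"
begin

fun digs :: "nat \<Rightarrow> nat \<Rightarrow> nat \<Rightarrow> nat list" where
  "digs b 0 m = []"
| "digs b (Suc l) m = (m mod b) # digs b l (m div b)"

fun enc :: "nat \<Rightarrow> nat list \<Rightarrow> nat" where
  "enc b [] = 0"
| "enc b (x # xs) = x + b * enc b xs"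

lemma length_digs[simp]: "length (digs b l m) = l"
  by (induction l arbitrary: m) auto

lemma set_digs: "0 < b \<Longrightarrow> i \<in> set (digs b l m) \<Longrightarrow> i < b"
  by (induction l arbitrary: m) auto

lemma digs_enc: "\<forall>i\<in>set w. i < b \<Longrightarrow> digs b (length w) (enc b w) = w"
  by (induction w) auto

lemma enc_digs: "m < b ^ l \<Longrightarrow> enc b (digs b l m) = m"
proof (induction l arbitrary: m)
  case 0 then show ?case by simp
next
  case (Suc l)
  then have "m div b < b ^ l"
    by (metis less_mult_imp_div_less mult.commute power_Suc)
  with Suc.IH show ?case by simp
qed

lemma enc_less: "\<forall>i\<in>set w. i < b \<Longrightarrow> enc b w < b ^ length w"
proof (induction w)
  case Nil then show ?case by simp
next
  case (Cons x w)
  then have "enc b w + 1 \<le> b ^ length w" by simp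
  then have "b * (enc b w + 1) \<le> b * b ^ length w" by (rule mult_le_mono2)
  moreover have "x < b" using Cons.prems by simp
  ultimately show ?case by (simp add: algebra_simps)
qed

locale T = fixes d n :: nat assumes d3: "3 \<le> d" and n2: "2 \<le> n"
begin

abbreviation "a \<equiv> d - 1"
abbreviation "V \<equiv> T_vertices d n"
abbreviation "em \<equiv> T_mult d n"

definition W where "W = {w. length w \<le> n - 2 \<and> (\<forall>i\<in>set w. i < a)}"

lemma V_eq: "V = insert None (Some ` W)"
  by (simp add: T_vertices_def W_def)

lemma finite_W: "finite W"
proof -
  have "W = {w. set w \<subseteq> {..<a} \<and> length w \<le> n - 2}" by (auto simp: W_def)
  then show ?thesis using finite_lists_length_le[of "{..<a}" "n-2"] by simp
qed

lemma finite_V: "finite V" by (simp add: V_eq finite_W)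

definition e :: "nat list option \<Rightarrow> nat list option \<Rightarrow> int" where
  "e u = (\<lambda>y. if y = u then 1 else 0)"

definition par :: "nat list \<Rightarrow> nat list option" where
  "par w = (if w = [] then None else Some (butlast w))"

definition E :: "nat list \<Rightarrow> nat list option \<Rightarrow> int" where
  "E w y = e (par w) y + (if length w < n - 2 then (\<Sum>x<a. e (Some (w @ [x])) y) else 0)
         + (if length w = n - 2 then int a * e None y else 0)"

lemma par_in_V: "w \<in> W \<Longrightarrow> par w \<in> V"
  by (auto simp: par_def V_eq W_def in_set_butlastD intro!: imageI)

lemma child_in_W: "w \<in> W \<Longrightarrow> length w < n - 2 \<Longrightarrow> x < a \<Longrightarrow> w @ [x] \<in> W"
  by (auto simp: W_def)

lemma sum_ind: "(\<Sum>x<a. e (Some (w @ [x])) (Some u)) = (if \<exists>x<a. u = w @ [x] then 1 else 0)"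
proof (cases "\<exists>x<a. u = w @ [x]")
  case True
  then obtain x0 where x0: "x0 < a" "u = w @ [x0]" by blast
  have "(\<Sum>x<a. e (Some (w @ [x])) (Some u)) = (\<Sum>x<a. if x = x0 then 1 else 0)"
    by (rule sum.cong) (auto simp: e_def x0)
  also have "\<dots> = 1" using x0 by simp
  finally show ?thesis using True by simp
next
  case False
  then show ?thesis by (auto simp: e_def intro!: sum.neutral)
qed

lemma em_E:
  assumes w: "w \<in> W" and y: "y \<in> V"
  shows "int (em (Some w) y) = E w y"
proof (cases y)
  case None
  then show ?thesis by (auto simp: E_def e_def par_def)
next
  case (Some u)
  with y have u: "u \<in> W" by (auto simp: V_eq)
  have A: "(\<exists>i. w = u @ [i]) \<longleftrightarrow> (w \<noteq> [] \<and> u = butlast w)"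
    by (metis append_butlast_last_id butlast_snoc snoc_eq_iff_butlast)
  have B: "(\<exists>i. u = w @ [i]) \<longleftrightarrow> (length w < n - 2 \<and> (\<exists>x<a. u = w @ [x]))"
    using u by (auto simp: W_def)
  have C: "\<not> ((\<exists>i. u = w @ [i]) \<and> (\<exists>i. w = u @ [i]))" by auto
  show ?thesis
    using A B C by (auto simp: Some E_def par_def sum_ind e_def)
qed

lemma E_self: "E w (Some w) = 0"
proof -
  have "par w \<noteq> Some w"
    by (auto simp: par_def) (metis append_butlast_last_id append_self_conv list.distinct(1))
  then show ?thesis by (auto simp: E_def e_def intro!: sum.neutral)
qed

lemma sum_e: "u \<in> V \<Longrightarrow> (\<Sum>y\<in>V. f y * e u y) = f u"
  by (simp add: e_def if_distrib finite_V cong: if_cong)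

lemma sum_E:
  assumes w: "w \<in> W"
  shows "(\<Sum>y\<in>V. f y * E w y) = f (par w) + (if length w < n - 2 then (\<Sum>x<a. f (Some (w @ [x]))) else 0)
         + (if length w = n - 2 then int a * f None else 0)"
proof -
  have s1: "(\<Sum>y\<in>V. f y * E w y) = (\<Sum>y\<in>V. f y * e (par w) y)
     + (if length w < n - 2 then (\<Sum>y\<in>V. \<Sum>x<a. f y * e (Some (w @ [x])) y) else 0)
     + (if length w = n - 2 then int a * (\<Sum>y\<in>V. f y * e None y) else 0)"
    by (auto simp: E_def algebra_simps sum.distrib sum_distrib_left)
  have s2: "(\<Sum>y\<in>V. \<Sum>x<a. f y * e (Some (w @ [x])) y) = (\<Sum>x<a. f (Some (w @ [x])))"
    if "length w < n - 2"
    apply (subst sum.swap)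
    apply (rule sum.cong, simp)
    apply (rule sum_e)
    using child_in_W[OF w that] by (auto simp: V_eq)
  show ?thesis unfolding s1 using s2 sum_e[OF par_in_V[OF w]] sum_e[of None] by (simp add: V_eq)
qed

lemma deg_T: assumes w: "w \<in> W" shows "int (mg_deg V em (Some w)) = int d"
proof -
  have "int (mg_deg V em (Some w)) = (\<Sum>y\<in>V - {Some w}. E w y)"
    unfolding mg_deg_def by (simp add: em_E[OF w])
  also have "\<dots> = (\<Sum>y\<in>V. E w y)"
    using E_self[of w] finite_V by (intro sum.mono_neutral_left) auto
  also have "\<dots> = (\<Sum>y\<in>V. 1 * E w y)" by simp
  also have "\<dots> = int d" unfolding sum_E[OF w] using d3 w by (auto simp: W_def)
  finally show ?thesis .
qed

lemma lap_Some: assumes w: "w \<in> W" and y: "y \<in> V"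
  shows "laplace_vec V em (Some w) y = E w y - int d * e (Some w) y"
  using y em_E[OF w y] deg_T[OF w] E_self[of w] by (auto simp: laplace_vec_def e_def)


definition ZVV where "ZVV = ZV V"

lemma grp: "group ZVV" by (simp add: ZVV_def ZV_def)

lemma carrier_ZVV: "carrier ZVV = extensional V"
  using finite_V by (auto simp: ZVV_def ZV_def carrier_sum_group PiE_def intro: finite_subset)

lemma mult_ZVV: "x \<otimes>\<^bsub>ZVV\<^esub> y = (\<lambda>i\<in>V. x i + y i)"
  by (simp add: ZVV_def ZV_def)

lemma one_ZVV: "\<one>\<^bsub>ZVV\<^esub> = (\<lambda>i\<in>V. 0)"
  by (simp add: ZVV_def ZV_def)

lemma inv_ZVV: "x \<in> carrier ZVV \<Longrightarrow> inv\<^bsub>ZVV\<^esub> x = (\<lambda>i\<in>V. - x i)"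
  unfolding ZVV_def ZV_def by (subst inv_sum_group) (auto simp: ZVV_def ZV_def)

lemma comm: "comm_group ZVV"
  by (rule group.group_comm_groupI[OF grp]) (auto simp: mult_ZVV)

definition "gens = insert (indicator_vec V None) (laplace_vec V em ` V)"
definition "L = generate ZVV gens"

lemma L_eq: "sandpile_lattice V em None = L"
  by (simp add: sandpile_lattice_def L_def gens_def ZVV_def)

lemma gens_carrier: "gens \<subseteq> carrier ZVV"
  by (auto simp: gens_def carrier_ZVV indicator_vec_def laplace_vec_def extensional_def)

lemma subL: "subgroup L ZVV"
  unfolding L_def by (rule group.generate_is_subgroup[OF grp gens_carrier])

lemma L_carrier: "x \<in> L \<Longrightarrow> x \<in> carrier ZVV"
  using subL subgroup.subset by blast

definition inL :: "(nat list option \<Rightarrow> int) \<Rightarrow> bool" where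
  "inL x \<longleftrightarrow> restrict x V \<in> L"

lemma inL_cong: "(\<And>y. y \<in> V \<Longrightarrow> x y = x' y) \<Longrightarrow> inL x = inL x'"
  unfolding inL_def by (metis restrict_ext)

lemma em_sym: "em x y = em y x"
  by (cases x; cases y) auto

lemma lap_sum0: assumes y: "y \<in> V" shows "(\<Sum>x\<in>V. laplace_vec V em x y) = 0"
proof -
  have "(\<Sum>x\<in>V. laplace_vec V em x y) = laplace_vec V em y y + (\<Sum>x\<in>V - {y}. laplace_vec V em x y)"
    using y finite_V by (simp add: sum.remove)
  also have "(\<Sum>x\<in>V - {y}. laplace_vec V em x y) = (\<Sum>x\<in>V - {y}. int (em y x))"
    using y by (intro sum.cong) (auto simp: laplace_vec_def em_sym)
  also have "\<dots> = int (mg_deg V em y)" by (simp add: mg_deg_def)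
  finally show ?thesis using y by (simp add: laplace_vec_def)
qed

lemma lap_None: assumes y: "y \<in> V"
  shows "laplace_vec V em None y = - (\<Sum>x\<in>Some ` W. laplace_vec V em x y)"
proof -
  have "(\<Sum>x\<in>V. laplace_vec V em x y) = laplace_vec V em None y + (\<Sum>x\<in>Some ` W. laplace_vec V em x y)"
    unfolding V_eq using finite_W by (subst sum.insert) auto
  then show ?thesis using lap_sum0[OF y] by simp
qed

lemma inL_add: "inL x \<Longrightarrow> inL y \<Longrightarrow> inL (\<lambda>i. x i + y i)"
proof -
  assume "inL x" "inL y"
  then have "restrict x V \<otimes>\<^bsub>ZVV\<^esub> restrict y V \<in> L"
    unfolding inL_def by (rule subgroup.m_closed[OF subL])
  moreover have "restrict x V \<otimes>\<^bsub>ZVV\<^esub> restrict y V = restrict (\<lambda>i. x i + y i) V"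
    unfolding mult_ZVV by (rule ext) simp
  ultimately show ?thesis by (simp add: inL_def)
qed

lemma inL_neg: "inL x \<Longrightarrow> inL (\<lambda>i. - x i)"
proof -
  assume "inL x"
  then have "inv\<^bsub>ZVV\<^esub> (restrict x V) \<in> L"
    unfolding inL_def by (rule subgroup.m_inv_closed[OF subL])
  moreover have "restrict x V \<in> carrier ZVV" by (simp add: carrier_ZVV)
  then have "inv\<^bsub>ZVV\<^esub> (restrict x V) = restrict (\<lambda>i. - x i) V"
    unfolding inv_ZVV[OF \<open>restrict x V \<in> carrier ZVV\<close>] unfolding restrict_def by auto
  ultimately show ?thesis by (simp add: inL_def)
qed

lemma inL_zero: "inL (\<lambda>i. 0)"
proof -
  have "\<one>\<^bsub>ZVV\<^esub> \<in> L" by (rule subgroup.one_closed[OF subL])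
  then show ?thesis by (simp add: inL_def one_ZVV)
qed

lemma inL_diff: "inL x \<Longrightarrow> inL y \<Longrightarrow> inL (\<lambda>i. x i - y i)"
proof -
  assume "inL x" "inL y"
  from inL_add[OF this(1) inL_neg[OF this(2)]] show ?thesis by simp
qed

lemma inL_smult_nat: "inL x \<Longrightarrow> inL (\<lambda>i. int k * x i)"
proof (induction k)
  case 0 then show ?case using inL_zero by simp
next
  case (Suc k)
  then have "inL (\<lambda>i. x i + int k * x i)" using inL_add by blast
  then show ?case by (simp add: algebra_simps)
qed

lemma inL_smult: assumes "inL x" shows "inL (\<lambda>i. c * x i)"
proof (cases "c \<ge> 0")
  case True
  from inL_smult_nat[OF assms, of "nat c"] True show ?thesis by simp
next
  case False
  from inL_neg[OF inL_smult_nat[OF assms, of "nat (-c)"]] False show ?thesis by simp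
qed

lemma inL_sum: "finite S \<Longrightarrow> (\<And>s. s \<in> S \<Longrightarrow> inL (x s)) \<Longrightarrow> inL (\<lambda>i. \<Sum>s\<in>S. x s i)"
proof (induction S rule: finite_induct)
  case empty then show ?case using inL_zero by simp
next
  case (insert s S)
  then have "inL (\<lambda>i. x s i + (\<Sum>s\<in>S. x s i))" using inL_add[of "x s"] by blast
  then show ?case using insert by simp
qed

lemma inL_gen: assumes g: "g \<in> gens" shows "inL g"
proof -
  have "g \<in> extensional V" using g gens_carrier by (auto simp: carrier_ZVV)
  then have "restrict g V = g" by (rule extensional_restrict)
  moreover have "g \<in> L" unfolding L_def by (rule generate.incl[OF g])
  ultimately show ?thesis by (simp add: inL_def)
qed

lemma inL_eNone: "inL (e None)"
proof -
  have "inL (indicator_vec V None)" by (rule inL_gen) (simp add: gens_def)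
  moreover have "inL (indicator_vec V None) = inL (e None)"
    by (rule inL_cong) (simp add: indicator_vec_def e_def)
  ultimately show ?thesis by simp
qed

lemma inL_lap: assumes w: "w \<in> W" shows "inL (\<lambda>y. E w y - int d * e (Some w) y)"
proof -
  have "inL (laplace_vec V em (Some w))" by (rule inL_gen) (use w in \<open>auto simp: gens_def V_eq\<close>)
  moreover have "inL (laplace_vec V em (Some w)) = inL (\<lambda>y. E w y - int d * e (Some w) y)"
    by (rule inL_cong) (simp add: lap_Some[OF w])
  ultimately show ?thesis by simp
qed

definition Q :: "nat \<Rightarrow> int" where "Q m = (\<Sum>i<m. int a ^ i)"

lemma Q_0[simp]: "Q 0 = 0" by (simp add: Q_def)
lemma Q_Suc: "Q (Suc m) = Q m + int a ^ m" by (simp add: Q_def)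
lemma Q_Suc': "Q (Suc m) = 1 + int a * Q m"
  unfolding Q_def by (subst sum.lessThan_Suc_shift) (simp add: sum_distrib_left)
lemma Q_1[simp]: "Q 1 = 1" by (simp add: Q_def)
lemma Q_1'[simp]: "Q (Suc 0) = 1" by (simp add: Q_def)
lemma int_d: "int d = int a + 1" using d3 by simp
lemma int_a: "int a = int d - 1" "int (d - Suc 0) = int d - 1" using d3 by simp_all
lemma Q_rec: "Q (Suc (Suc m)) + int a * Q m = int d * Q (Suc m)"
  by (simp add: Q_Suc int_d algebra_simps Q_Suc'[of m])
lemma Q_2: "Q 2 = int d" using Q_rec[of 0] by (simp add: numeral_2_eq_2)
lemma Q_pos: "m \<ge> 1 \<Longrightarrow> Q m \<ge> 1"
proof (induction m)
  case 0 then show ?case by simp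
next
  case (Suc m) then show ?case by (cases "m = 0") (auto simp: Q_Suc')
qed
lemma Q_nonneg: "Q m \<ge> 0"
  by (cases "m = 0") (use Q_pos[of m] in auto)
lemma Q_qsum: "Q m = int (qsum a m)"
  by (simp add: Q_def qsum_def)

lemma E_base: "length w = n - 2 \<Longrightarrow> E w y = e (par w) y + int a * e None y"
  by (simp add: E_def)
lemma E_step: "length w < n - 2 \<Longrightarrow> E w y = e (par w) y + (\<Sum>x<a. e (Some (w @ [x])) y)"
  by (simp add: E_def)

lemma radial_aux: "\<forall>w\<in>W. n - 2 - length w = t \<longrightarrow>
   inL (\<lambda>y. Q (n - length w) * e (Some w) y - Q (n - Suc (length w)) * e (par w) y)"
proof (induction t)
  case 0
  show ?case
  proof (intro ballI impI)
    fix w assume w: "w \<in> W" and t: "n - 2 - length w = 0"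
    then have lw: "length w = n - 2" by (auto simp: W_def)
    have "inL (\<lambda>y. - (E w y - int d * e (Some w) y) + int a * e None y)"
      by (rule inL_add[OF inL_neg[OF inL_lap[OF w]] inL_smult[OF inL_eNone]])
    moreover have "n - length w = 2" "n - Suc (length w) = 1" using lw n2 by auto
    ultimately show "inL (\<lambda>y. Q (n - length w) * e (Some w) y - Q (n - Suc (length w)) * e (par w) y)"
      using lw by (simp add: E_base Q_2)
  qed
next
  case (Suc t)
  show ?case
  proof (intro ballI impI)
    fix w assume w: "w \<in> W" and t: "n - 2 - length w = Suc t"
    then have lw: "length w < n - 2" by auto
    define m where "m = n - 2 - length w"
    have m: "n - length w = Suc (Suc m)" "n - Suc (length w) = Suc m" "n - Suc (Suc (length w)) = m"
      using lw n2 by (auto simp: m_def)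
    have IH: "inL (\<lambda>y. Q (Suc m) * e (Some (w @ [x])) y - Q m * e (Some w) y)" if x: "x < a" for x
    proof -
      have c: "w @ [x] \<in> W" by (rule child_in_W[OF w lw x])
      have "n - 2 - length (w @ [x]) = t" using t by simp
      with Suc.IH c have "inL (\<lambda>y. Q (n - length (w @ [x])) * e (Some (w @ [x])) y
                - Q (n - Suc (length (w @ [x]))) * e (par (w @ [x])) y)" by blast
      moreover have "n - length (w @ [x]) = Suc m" "n - Suc (length (w @ [x])) = m" using m by auto
      ultimately show ?thesis by (simp add: par_def)
    qed
    have S: "inL (\<lambda>y. \<Sum>x<a. Q (Suc m) * e (Some (w @ [x])) y - Q m * e (Some w) y)"
      by (rule inL_sum) (auto intro: IH)
    have Lw: "inL (\<lambda>y. Q (Suc m) * (E w y - int d * e (Some w) y))"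
      by (rule inL_smult[OF inL_lap[OF w]])
    have D: "inL (\<lambda>y. (\<Sum>x<a. Q (Suc m) * e (Some (w @ [x])) y - Q m * e (Some w) y)
               - Q (Suc m) * (E w y - int d * e (Some w) y))"
      by (rule inL_diff[OF S Lw])
    have eq: "(\<Sum>x<a. Q (Suc m) * e (Some (w @ [x])) y - Q m * e (Some w) y)
               - Q (Suc m) * (E w y - int d * e (Some w) y)
            = Q (Suc (Suc m)) * e (Some w) y - Q (Suc m) * e (par w) y" for y
    proof -
      have h1: "(\<Sum>x<a. Q (Suc m) * e (Some (w @ [x])) y - Q m * e (Some w) y)
          = Q (Suc m) * (\<Sum>x<a. e (Some (w @ [x])) y) - int a * Q m * e (Some w) y"
        by (simp add: sum_subtractf sum_distrib_left)
      have h3: "Q (Suc (Suc m)) = int d * Q (Suc m) - int a * Q m" using Q_rec[of m] by simp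
      show ?thesis unfolding h1 h3 E_step[OF lw, of y] by (simp add: algebra_simps)
    qed
    show "inL (\<lambda>y. Q (n - length w) * e (Some w) y - Q (n - Suc (length w)) * e (par w) y)"
      using D unfolding eq m .
  qed
qed

lemma radial: "w \<in> W \<Longrightarrow>
   inL (\<lambda>y. Q (n - length w) * e (Some w) y - Q (n - Suc (length w)) * e (par w) y)"
  using radial_aux by blast

abbreviation "I \<equiv> target_index a n"

lemma finite_I: "finite I"
proof -
  have "I \<subseteq> insert (n, 0) ({..n} \<times> {..<a ^ n * a})"
  proof
    fix i assume "i \<in> I"
    then obtain k j where i: "i = (k, j)" "i = (n, 0) \<or> (2 \<le> k \<and> k \<le> n - 1 \<and> j < a ^ (n - 1 - k) * (a - 1))"
      by (auto simp: target_index_def)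
    have "a ^ (n - 1 - k) * (a - 1) \<le> a ^ n * a"
      using d3 by (intro mult_le_mono power_increasing) auto
    with i show "i \<in> insert (n, 0) ({..n} \<times> {..<a ^ n * a})" by auto
  qed
  then show ?thesis by (rule finite_subset) auto
qed

definition vv :: "nat \<times> nat \<Rightarrow> nat list" where
  "vv i = digs a (n - 1 - fst i) (snd i div (a - 1))"
definition jj :: "nat \<times> nat \<Rightarrow> nat" where
  "jj i = Suc (snd i mod (a - 1))"

lemma a2: "a \<ge> 2" using d3 by simp

lemma idx_nonroot:
  assumes i: "i \<in> I" "fst i \<noteq> n"
  shows "2 \<le> fst i" "fst i \<le> n - 1" "snd i < a ^ (n - 1 - fst i) * (a - 1)"
  using i by (auto simp: target_index_def)

lemma vv_props:
  assumes i: "i \<in> I" "fst i \<noteq> n"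
  shows "length (vv i) = n - 1 - fst i" "length (vv i) < n - 2" "vv i \<in> W"
    "1 \<le> jj i" "jj i < a" "snd i div (a - 1) < a ^ (n - 1 - fst i)"
proof -
  note ix = idx_nonroot[OF i]
  show l: "length (vv i) = n - 1 - fst i" by (simp add: vv_def)
  show "length (vv i) < n - 2" using l ix by auto
  then show "vv i \<in> W" using a2 by (auto simp: W_def vv_def dest: set_digs[rotated])
  show "1 \<le> jj i" by (simp add: jj_def)
  have "snd i mod (a - 1) < a - 1" using a2 by (intro mod_less_divisor) simp
  then show "jj i < a" unfolding jj_def by linarith
  show "snd i div (a - 1) < a ^ (n - 1 - fst i)"
    using ix(3) a2 by (simp add: less_mult_imp_div_less)
qed

lemma vv_inj:
  assumes i: "i \<in> I" "fst i \<noteq> n" and i': "i' \<in> I" "fst i' \<noteq> n"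
    and eq: "vv i = vv i'" "jj i = jj i'"
  shows "i = i'"
proof -
  have k: "fst i = fst i'"
    using vv_props(1)[OF i] vv_props(1)[OF i'] eq idx_nonroot[OF i] idx_nonroot[OF i'] by (metis diff_diff_cancel le_trans diff_le_self n2 le_add_diff_inverse2 add_diff_cancel_left')
  have "enc a (vv i) = snd i div (a - 1)" unfolding vv_def by (rule enc_digs[OF vv_props(6)[OF i]])
  moreover have "enc a (vv i') = snd i' div (a - 1)" unfolding vv_def by (rule enc_digs[OF vv_props(6)[OF i']])
  ultimately have "snd i div (a - 1) = snd i' div (a - 1)" using eq by simp
  moreover have "snd i mod (a - 1) = snd i' mod (a - 1)" using eq by (simp add: jj_def)
  ultimately have "snd i = snd i'" by (metis div_mult_mod_eq)
  with k show ?thesis by (simp add: prod_eq_iff)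
qed

lemma vv_surj:
  assumes v: "v \<in> W" "length v < n - 2" and x: "1 \<le> x" "x < a"
  shows "\<exists>i\<in>I. fst i \<noteq> n \<and> vv i = v \<and> jj i = x"
proof -
  define k where "k = n - 1 - length v"
  define j where "j = enc a v * (a - 1) + (x - 1)"
  have vs: "\<forall>i\<in>set v. i < a" using v by (auto simp: W_def)
  have el: "enc a v < a ^ length v" by (rule enc_less[OF vs])
  have lk: "length v = n - 1 - k" using v by (auto simp: k_def)
  have "j < enc a v * (a - 1) + (a - 1)" using x unfolding j_def by linarith
  also have "\<dots> = (enc a v + 1) * (a - 1)" by (simp only: add_mult_distrib mult_1)
  also have "\<dots> \<le> a ^ (n - 1 - k) * (a - 1)" using el lk by (intro mult_le_mono1) auto
  finally have jl: "j < a ^ (n - 1 - k) * (a - 1)" .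
  have kk: "2 \<le> k" "k \<le> n - 1" "k \<noteq> n" using v n2 by (auto simp: k_def)
  have kjI: "(k, j) \<in> I" using kk jl by (auto simp: target_index_def)
  have gen: "\<And>q r (b::nat). r < b \<Longrightarrow> (q * b + r) div b = q \<and> (q * b + r) mod b = r"
    by simp
  have "x - 1 < a - 1" using x by linarith
  from gen[OF this, of "enc a v"]
  have "j div (a - 1) = enc a v" "j mod (a - 1) = x - 1" by (simp_all only: j_def)
  then show ?thesis using kjI kk x lk digs_enc[OF vs]
    by (intro bexI[of _ "(k, j)"]) (auto simp: vv_def jj_def)
qed

definition phi :: "(nat list option \<Rightarrow> int) \<Rightarrow> (nat list option \<Rightarrow> int) \<Rightarrow> int" where
  "phi f x = (\<Sum>y\<in>V. f y * x y)"

definition beta :: "nat \<times> nat \<Rightarrow> nat list \<Rightarrow> int" where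
  "beta i u = (if strict_prefix (vv i) u then 1 else 0) - int a * (if prefix (vv i @ [jj i]) u then 1 else 0)"

definition Fv :: "nat \<times> nat \<Rightarrow> nat list \<Rightarrow> int" where
  "Fv i u = (if fst i = n then - int a else beta i u) * Q (n - 1 - length u)"

definition fI :: "nat \<times> nat \<Rightarrow> nat list option \<Rightarrow> int" where
  "fI i y = (case y of None \<Rightarrow> 0 | Some u \<Rightarrow> Fv i u)"

definition h :: "nat \<times> nat \<Rightarrow> nat list option \<Rightarrow> int" where
  "h i y = (if fst i = n then e (Some []) y else e (Some (vv i @ [jj i])) y - e (Some (vv i @ [0])) y)"

lemma phi_e: "u \<in> V \<Longrightarrow> phi f (e u) = f u"
  unfolding phi_def by (rule sum_e)

lemma phi_lin: "phi f (\<lambda>y. c * x y + c' * x' y) = c * phi f x + c' * phi f x'"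
  by (simp add: phi_def sum.distrib sum_distrib_left algebra_simps)

lemma phi_lap: assumes w: "w \<in> W"
  shows "phi (fI i) (\<lambda>y. E w y - int d * e (Some w) y)
     = fI i (par w) + (\<Sum>x<a. Fv i (w @ [x])) - int d * Fv i w"
proof -
  have wV: "Some w \<in> V" using w by (simp add: V_eq)
  have "phi (fI i) (\<lambda>y. E w y - int d * e (Some w) y) = phi (fI i) (E w) - int d * phi (fI i) (e (Some w))"
    using phi_lin[of "fI i" 1 "E w" "- int d" "e (Some w)"] by simp
  also have "phi (fI i) (e (Some w)) = Fv i w" using phi_e[OF wV] by (simp add: fI_def)
  also have "phi (fI i) (E w) = fI i (par w) + (if length w < n - 2 then (\<Sum>x<a. Fv i (w @ [x])) else 0)"
    unfolding phi_def sum_E[OF w] by (simp add: fI_def)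
  also have "(if length w < n - 2 then (\<Sum>x<a. Fv i (w @ [x])) else 0) = (\<Sum>x<a. Fv i (w @ [x]))"
  proof -
    have "length w \<le> n - 2" using w by (simp add: W_def)
    moreover have "length w = n - 2 \<Longrightarrow> Fv i (w @ [x]) = 0" for x using n2 by (simp add: Fv_def)
    ultimately show ?thesis by auto
  qed
  finally show ?thesis .
qed

lemma beta_snoc: "beta i (w @ [x]) = (if prefix (vv i) w then 1 else 0)
     - int a * (if (vv i = w \<and> jj i = x) \<or> prefix (vv i @ [jj i]) w then 1 else 0)"
proof -
  have "strict_prefix (vv i) (w @ [x]) \<longleftrightarrow> prefix (vv i) w"
    by (auto simp: strict_prefix_def dest: prefix_length_le)
  moreover have "prefix (vv i @ [jj i]) (w @ [x]) \<longleftrightarrow> (vv i = w \<and> jj i = x) \<or> prefix (vv i @ [jj i]) w"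
    by auto
  ultimately show ?thesis by (simp add: beta_def)
qed

lemma beta_np: "\<not> prefix (vv i) w \<Longrightarrow> beta i w = 0"
  by (auto simp: beta_def strict_prefix_def dest: prefix_snocD prefix_order.less_imp_le)

lemma dvd_lap:
  assumes i: "i \<in> I" and w: "w \<in> W"
  shows "Q (fst i) dvd phi (fI i) (\<lambda>y. E w y - int d * e (Some w) y)"
proof -
  have lw: "length w \<le> n - 2" using w by (simp add: W_def)
  define m where "m = n - 2 - length w"
  have m1: "n - 1 - length w = Suc m" and m0: "n - 1 - length (w @ [x]) = m" for x
    using lw n2 by (auto simp: m_def)
  have m2: "w \<noteq> [] \<Longrightarrow> n - 1 - length (butlast w) = Suc (Suc m)"
    using lw n2 by (cases w rule: rev_cases) (auto simp: m_def)
  have rec: "Q (Suc (Suc m)) = int d * Q (Suc m) - int a * Q m" using Q_rec[of m] by simp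
  let ?N = "fI i (par w) + (\<Sum>x<a. Fv i (w @ [x])) - int d * Fv i w"
  have "Q (fst i) dvd ?N"
  proof (cases "fst i = n")
    case True
    have "?N = (if w = [] then 0 else - int a * Q (Suc (Suc m))) - int a * int a * Q m + int d * int a * Q (Suc m)"
      using True m1 m0 m2 by (simp add: fI_def par_def Fv_def int_a algebra_simps)
    also have "\<dots> = (if w = [] then int a * Q (Suc (Suc m)) else 0)" unfolding rec by (simp add: algebra_simps int_a)
    finally have N: "?N = (if w = [] then int a * Q (Suc (Suc m)) else 0)" .
    show ?thesis
    proof (cases "w = []")
      case True
      then have "Suc (Suc m) = n" using n2 by (simp add: m_def)
      with True N \<open>fst i = n\<close> show ?thesis by simp
    next
      case False with N show ?thesis by simp
    qed
  next
    case nr: False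
    have iv: "length (vv i) = n - 1 - fst i" "jj i < a" "1 \<le> jj i" using vv_props[OF i nr] by auto
    have kk: "2 \<le> fst i" "fst i \<le> n - 1" using idx_nonroot[OF i nr] by auto
    have N: "?N = (if w = [] then 0 else beta i (butlast w) * Q (Suc (Suc m)))
               + (\<Sum>x<a. beta i (w @ [x])) * Q m - int d * beta i w * Q (Suc m)"
      using nr m1 m0 m2 by (simp add: fI_def par_def Fv_def sum_distrib_right)
    show ?thesis
    proof (cases "prefix (vv i) w")
      case False
      have "beta i w = 0" by (rule beta_np[OF False])
      moreover have "beta i (w @ [x]) = 0" for x using False by (auto simp: beta_snoc dest: prefix_snocD prefix_order.less_imp_le)
      moreover have "w \<noteq> [] \<Longrightarrow> beta i (butlast w) = 0"
        using False by (intro beta_np) (metis prefix_order.order_trans prefixeq_butlast)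
      ultimately have "?N = 0" unfolding N by simp
      then show ?thesis by simp
    next
      case True
      show ?thesis
      proof (cases "vv i = w")
        case eq: True
        have b0: "beta i w = 0" using eq by (auto simp: beta_def strict_prefix_def dest: prefix_length_le)
        have bb: "beta i (butlast w) = 0" if "w \<noteq> []"
        proof -
          have "length (butlast w) < length w" using that by simp
          then show ?thesis using eq by (intro beta_np) (auto dest: prefix_length_le)
        qed
        have "(\<Sum>x<a. beta i (w @ [x])) = (\<Sum>x<a. 1 - int a * (if x = jj i then 1 else 0))"
          using eq by (intro sum.cong) (auto simp: beta_snoc dest: prefix_length_le)
        also have "\<dots> = 0"
        proof -
          let ?g = "\<lambda>x. 1 - int a * (if x = jj i then 1 else 0)"
          have "(\<Sum>x<a. ?g x) = ?g (jj i) + (\<Sum>x\<in>{..<a} - {jj i}. ?g x)"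
            by (rule sum.remove) (use iv in auto)
          moreover have "(\<Sum>x\<in>{..<a} - {jj i}. ?g x) = (\<Sum>x\<in>{..<a} - {jj i}. 1)"
            by (rule sum.cong) auto
          moreover have "card ({..<a} - {jj i}) = a - 1" using iv by simp
          ultimately show ?thesis using iv a2 by (simp add: of_nat_diff)
        qed
        finally have "?N = 0" unfolding N using b0 bb by simp
        then show ?thesis by simp
      next
        case ne: False
        then have sp: "strict_prefix (vv i) w" using True by (simp add: strict_prefix_def)
        then have wne: "w \<noteq> []" by auto
        obtain b l where wb: "w = b @ [l]" using wne by (cases w rule: rev_cases) auto
        have pb: "prefix (vv i) b" using sp wb by (auto simp: strict_prefix_def)
        have bw: "beta i w = 1 - int a * (if prefix (vv i @ [jj i]) w then 1 else 0)"
          using sp by (simp add: beta_def)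
        have bc: "beta i (w @ [x]) = beta i w" for x
          using True ne bw by (simp add: beta_snoc)
        have S: "(\<Sum>x<a. beta i (w @ [x])) = int a * beta i w" using bc by simp
        show ?thesis
        proof (cases "vv i = b")
          case True
          then have "beta i b = 0" by (auto simp: beta_def strict_prefix_def dest: prefix_length_le)
          then have "?N = - beta i w * Q (Suc (Suc m))" unfolding N S rec using wb by (simp add: algebra_simps)
          moreover have "Suc (Suc m) = fst i" using True wb iv kk lw by (simp add: m_def)
          ultimately show ?thesis by simp
        next
          case False
          then have "strict_prefix (vv i) b" using pb by (simp add: strict_prefix_def)
          then have "beta i b = beta i w"
            using bw wb False by (simp add: beta_def beta_snoc)
          then have "?N = 0" unfolding N S rec using wb by (simp add: algebra_simps)
          then show ?thesis by simp
        qed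
      qed
    qed
  qed
  then show ?thesis using phi_lap[OF w, of i] by simp
qed

lemma phi_cong: "(\<And>y. y \<in> V \<Longrightarrow> x y = x' y) \<Longrightarrow> phi f x = phi f x'"
  unfolding phi_def by (intro sum.cong) auto

lemma dvd_lapvec: assumes i: "i \<in> I" and u: "u \<in> V"
  shows "Q (fst i) dvd phi (fI i) (laplace_vec V em u)"
proof (cases u)
  case (Some w)
  then have w: "w \<in> W" using u by (auto simp: V_eq)
  have "phi (fI i) (laplace_vec V em u) = phi (fI i) (\<lambda>y. E w y - int d * e (Some w) y)"
    by (rule phi_cong) (simp add: Some lap_Some[OF w])
  then show ?thesis using dvd_lap[OF i w] by simp
next
  case None
  have "phi (fI i) (laplace_vec V em u) = phi (fI i) (\<lambda>y. - (\<Sum>x\<in>Some ` W. laplace_vec V em x y))"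
    by (rule phi_cong) (simp add: None lap_None)
  also have "\<dots> = - (\<Sum>x\<in>Some ` W. phi (fI i) (laplace_vec V em x))"
    unfolding phi_def by (simp add: sum_distrib_left sum_negf) (rule sum.swap)
  also have "Q (fst i) dvd \<dots>"
  proof (intro dvd_minus_iff[THEN iffD2] dvd_sum)
    fix x assume "x \<in> Some ` W"
    then obtain w where "w \<in> W" "x = Some w" by auto
    have "phi (fI i) (laplace_vec V em x) = phi (fI i) (\<lambda>y. E w y - int d * e (Some w) y)"
      by (rule phi_cong) (simp add: \<open>x = Some w\<close> lap_Some[OF \<open>w \<in> W\<close>])
    then show "Q (fst i) dvd phi (fI i) (laplace_vec V em x)" using dvd_lap[OF i \<open>w \<in> W\<close>] by simp
  qed
  finally show ?thesis .
qed

lemma dvd_gen: assumes i: "i \<in> I" and g: "g \<in> gens"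
  shows "Q (fst i) dvd phi (fI i) g"
proof -
  consider "g = indicator_vec V None" | u where "u \<in> V" "g = laplace_vec V em u"
    using g by (auto simp: gens_def)
  then show ?thesis
  proof cases
    case 1
    have "phi (fI i) g = phi (fI i) (e None)"
      by (rule phi_cong) (simp add: 1 indicator_vec_def e_def)
    also have "\<dots> = 0" by (simp add: phi_e V_eq fI_def)
    finally show ?thesis by simp
  next
    case 2
    then show ?thesis using dvd_lapvec[OF i] by simp
  qed
qed

lemma dvd_L: assumes i: "i \<in> I" and x: "x \<in> L"
  shows "Q (fst i) dvd phi (fI i) x"
  using x unfolding L_def
proof (induction x rule: generate.induct)
  case one
  then show ?case by (simp add: one_ZVV phi_def)
next
  case (incl g)
  then show ?case by (rule dvd_gen[OF i])
next
  case (inv g)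
  then have gc: "g \<in> carrier ZVV" using gens_carrier by auto
  have "phi (fI i) (inv\<^bsub>ZVV\<^esub> g) = - phi (fI i) g"
    unfolding inv_ZVV[OF gc] phi_def by (simp add: sum_negf)
  then show ?case using dvd_gen[OF i inv] by simp
next
  case (eng h1 h2)
  have "phi (fI i) (h1 \<otimes>\<^bsub>ZVV\<^esub> h2) = phi (fI i) h1 + phi (fI i) h2"
    unfolding mult_ZVV phi_def by (simp add: sum.distrib distrib_left)
  then show ?case using eng by simp
qed

lemma root_idx: "i \<in> I \<Longrightarrow> fst i = n \<Longrightarrow> i = (n, 0)"
  using n2 by (auto simp: target_index_def)

lemma phi_h_root: "fst i' = n \<Longrightarrow> phi (fI i) (h i') = Fv i []"
proof -
  assume "fst i' = n"
  then have "h i' = e (Some [])" by (simp add: h_def fun_eq_iff)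
  then have "phi (fI i) (h i') = phi (fI i) (e (Some []))" by simp
  also have "\<dots> = Fv i []" by (subst phi_e) (auto simp: V_eq W_def fI_def)
  finally show ?thesis .
qed

lemma phi_h_nonroot: assumes i': "i' \<in> I" "fst i' \<noteq> n"
  shows "phi (fI i) (h i') = Fv i (vv i' @ [jj i']) - Fv i (vv i' @ [0])"
proof -
  have c: "vv i' @ [x] \<in> W" if "x < a" for x
    using child_in_W[OF vv_props(3)[OF i'] vv_props(2)[OF i'] that] .
  have V1: "Some (vv i' @ [jj i']) \<in> V" using c[OF vv_props(5)[OF i']] by (simp add: V_eq)
  have V0: "Some (vv i' @ [0]) \<in> V" using c[of 0] a2 by (simp add: V_eq)
  have "h i' = (\<lambda>y. 1 * e (Some (vv i' @ [jj i'])) y + (-1) * e (Some (vv i' @ [0])) y)"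
    using i' by (simp add: h_def fun_eq_iff)
  then have "phi (fI i) (h i') = phi (fI i) (\<lambda>y. 1 * e (Some (vv i' @ [jj i'])) y + (-1) * e (Some (vv i' @ [0])) y)"
    by simp
  also have "\<dots> = Fv i (vv i' @ [jj i']) - Fv i (vv i' @ [0])"
    unfolding phi_lin phi_e[OF V1] phi_e[OF V0] by (simp add: fI_def)
  finally show ?thesis .
qed

lemma dual: assumes i: "i \<in> I" and i': "i' \<in> I"
  shows "Q (fst i) dvd phi (fI i) (h i') - (if i = i' then 1 else 0)"
proof (cases "fst i' = n")
  case r': True
  show ?thesis
  proof (cases "fst i = n")
    case True
    then have "i = i'" using root_idx[OF i] root_idx[OF i' r'] by simp
    have "Q n = Q (Suc (n - 1))" using n2 by simp
    also have "\<dots> = 1 + int a * Q (n - 1)" by (rule Q_Suc')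
    finally have "phi (fI i) (h i') - 1 = - Q n"
      using True phi_h_root[OF r'] by (simp add: Fv_def)
    then show ?thesis using \<open>i = i'\<close> True by simp
  next
    case False
    then have "i \<noteq> i'" using r' by auto
    have "beta i [] = 0" by (simp add: beta_def)
    then show ?thesis using \<open>i \<noteq> i'\<close> False phi_h_root[OF r'] by (simp add: Fv_def)
  qed
next
  case nr': False
  note ph = phi_h_nonroot[OF i' nr', of i]
  show ?thesis
  proof (cases "fst i = n")
    case True
    then have "i \<noteq> i'" using nr' by auto
    then show ?thesis using True ph by (simp add: Fv_def)
  next
    case nr: False
    have j1: "1 \<le> jj i" using vv_props[OF i nr] by simp
    have diff: "beta i (vv i' @ [jj i']) - beta i (vv i' @ [0])
        = - int a * (if vv i = vv i' \<and> jj i = jj i' then 1 else 0)"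
      using j1 by (simp add: beta_snoc)
    have ph2: "phi (fI i) (h i') = Q (n - 1 - Suc (length (vv i'))) *
         (beta i (vv i' @ [jj i']) - beta i (vv i' @ [0]))"
      using ph nr by (simp add: Fv_def algebra_simps)
    show ?thesis
    proof (cases "vv i = vv i' \<and> jj i = jj i'")
      case True
      then have "i = i'" using vv_inj[OF i nr i' nr'] by simp
      have k: "2 \<le> fst i" "fst i \<le> n - 1" using idx_nonroot[OF i nr] by auto
      have "n - 1 - Suc (length (vv i')) = fst i - 1"
        using vv_props(1)[OF i nr] True k by simp
      moreover have "Q (fst i) = 1 + int a * Q (fst i - 1)"
        using Q_Suc'[of "fst i - 1"] k by simp
      ultimately have "phi (fI i) (h i') - 1 = - Q (fst i)"
        using ph2 diff True by (simp add: algebra_simps)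
      then show ?thesis using \<open>i = i'\<close> by simp
    next
      case False
      then have "i \<noteq> i'" by auto
      then show ?thesis using ph2 diff False by simp
    qed
  qed
qed

lemma inL_qh: assumes i: "i \<in> I" shows "inL (\<lambda>y. Q (fst i) * h i y)"
proof (cases "fst i = n")
  case True
  have w: "[] \<in> W" by (simp add: W_def)
  have "inL (\<lambda>y. (Q (n - length ([]::nat list)) * e (Some []) y - Q (n - Suc (length ([]::nat list))) * e (par []) y)
               + Q (n - 1) * e None y)"
  proof (rule inL_add)
    show "inL (\<lambda>y. Q (n - length ([]::nat list)) * e (Some []) y - Q (n - Suc (length ([]::nat list))) * e (par []) y)"
      by (rule radial[OF w])
    show "inL (\<lambda>y. Q (n - 1) * e None y)" by (rule inL_smult[OF inL_eNone])
  qed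
  then show ?thesis using True by (simp add: h_def par_def)
next
  case nr: False
  note vp = vv_props[OF i nr]
  have c1: "vv i @ [jj i] \<in> W" using child_in_W[OF vp(3) vp(2) vp(5)] .
  have c0: "vv i @ [0] \<in> W" using child_in_W[OF vp(3) vp(2)] a2 by simp
  have k: "n - length (vv i @ [x]) = fst i" for x using vp(1) idx_nonroot[OF i nr] by simp
  have "inL (\<lambda>y. (Q (n - length (vv i @ [jj i])) * e (Some (vv i @ [jj i])) y
                   - Q (n - Suc (length (vv i @ [jj i]))) * e (par (vv i @ [jj i])) y)
                - (Q (n - length (vv i @ [0])) * e (Some (vv i @ [0])) y
                   - Q (n - Suc (length (vv i @ [0]))) * e (par (vv i @ [0])) y))"
    by (rule inL_diff[OF radial[OF c1] radial[OF c0]])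
  then show ?thesis using nr unfolding k by (simp add: h_def par_def algebra_simps)
qed

definition inM :: "(nat list option \<Rightarrow> int) \<Rightarrow> bool" where
  "inM x \<longleftrightarrow> (\<exists>c. inL (\<lambda>y. x y - (\<Sum>i\<in>I. c i * h i y)))"

lemma inM_inL: "inL x \<Longrightarrow> inM x"
  unfolding inM_def by (rule exI[of _ "\<lambda>_. 0"]) simp

lemma inM_h: "i \<in> I \<Longrightarrow> inM (h i)"
  unfolding inM_def
proof (rule exI[of _ "\<lambda>j. if j = i then 1 else 0"])
  assume "i \<in> I"
  then have "(\<Sum>j\<in>I. (if j = i then 1 else 0) * h j y) = h i y" for y
  proof -
    have "(\<Sum>j\<in>I. (if j = i then 1 else 0) * h j y) = (\<Sum>j\<in>I. if j = i then h j y else 0)"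
      by (rule sum.cong) auto
    then show ?thesis using \<open>i \<in> I\<close> finite_I by simp
  qed
  then show "inL (\<lambda>y. h i y - (\<Sum>j\<in>I. (if j = i then 1 else 0) * h j y))"
    using inL_zero by simp
qed

lemma inM_add: assumes "inM x" "inM x'" shows "inM (\<lambda>y. x y + x' y)"
proof -
  obtain c c' where "inL (\<lambda>y. x y - (\<Sum>i\<in>I. c i * h i y))" "inL (\<lambda>y. x' y - (\<Sum>i\<in>I. c' i * h i y))"
    using assms by (auto simp: inM_def)
  from inL_add[OF this] have "inL (\<lambda>y. (x y + x' y) - (\<Sum>i\<in>I. (c i + c' i) * h i y))"
    by (simp add: algebra_simps sum.distrib)
  then show ?thesis unfolding inM_def by (rule exI[of _ "\<lambda>i. c i + c' i"])
qed

lemma inM_smult: assumes "inM x" shows "inM (\<lambda>y. k * x y)"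
proof -
  obtain c where "inL (\<lambda>y. x y - (\<Sum>i\<in>I. c i * h i y))"
    using assms by (auto simp: inM_def)
  from inL_smult[OF this, of k] have "inL (\<lambda>y. k * x y - (\<Sum>i\<in>I. (k * c i) * h i y))"
    by (simp add: algebra_simps sum_distrib_left)
  then show ?thesis unfolding inM_def by (rule exI[of _ "\<lambda>i. k * c i"])
qed

lemma inM_diff: assumes "inM x" "inM x'" shows "inM (\<lambda>y. x y - x' y)"
  using inM_add[OF assms(1) inM_smult[OF assms(2), of "-1"]] by simp

lemma inM_cong: "(\<And>y. y \<in> V \<Longrightarrow> x y = x' y) \<Longrightarrow> inM x \<Longrightarrow> inM x'"
  unfolding inM_def using inL_cong
  by (metis (no_types, lifting))

lemma inM_sum: "finite S \<Longrightarrow> (\<And>s. s \<in> S \<Longrightarrow> inM (x s)) \<Longrightarrow> inM (\<lambda>y. \<Sum>s\<in>S. x s y)"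
proof (induction S rule: finite_induct)
  case empty then show ?case using inM_inL[OF inL_zero] by simp
next
  case (insert s S)
  then have "inM (\<lambda>y. x s y + (\<Sum>s\<in>S. x s y))" using inM_add[of "x s"] by blast
  then show ?case using insert by simp
qed

lemma gen_step:
  assumes w: "w \<in> W" and lw: "length w < n - 2"
    and eW: "inM (e (Some w))" and eP: "inM (e (par w))" and x: "x < a"
  shows "inM (e (Some (w @ [x])))"
proof -
  let ?c = "\<lambda>z. e (Some (w @ [z]))"
  have S: "inM (\<lambda>y. \<Sum>z<a. ?c z y)"
  proof -
    have "inM (\<lambda>y. ((E w y - int d * e (Some w) y) - e (par w) y) + int d * e (Some w) y)"
      by (intro inM_add inM_diff inM_smult inM_inL inL_lap w eP eW)
    then show ?thesis by (rule inM_cong[rotated]) (simp add: E_step[OF lw])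
  qed
  have H: "inM (\<lambda>y. ?c z y - ?c 0 y)" if z: "1 \<le> z" "z < a" for z
  proof -
    obtain i where i: "i \<in> I" "fst i \<noteq> n" "vv i = w" "jj i = z" using vv_surj[OF w lw z] by blast
    have "inM (h i)" by (rule inM_h[OF i(1)])
    then show ?thesis by (rule inM_cong[rotated]) (simp add: h_def i)
  qed
  have A: "inM (\<lambda>y. int a * ?c 0 y)"
  proof -
    have Hs: "inM (\<lambda>y. \<Sum>z\<in>{1..<a}. ?c z y - ?c 0 y)"
      using inM_sum[of "{1..<a}" "\<lambda>z y. ?c z y - ?c 0 y"] H by auto
    have "inM (\<lambda>y. (\<Sum>z<a. ?c z y) - (\<Sum>z\<in>{1..<a}. ?c z y - ?c 0 y))"
      by (rule inM_diff[OF S Hs])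
    moreover have "(\<Sum>z<a. ?c z y) - (\<Sum>z\<in>{1..<a}. ?c z y - ?c 0 y) = int a * ?c 0 y" for y
    proof -
      have "{..<a} = insert 0 {1..<a}" using a2 by auto
      then have "(\<Sum>z<a. ?c z y) = ?c 0 y + (\<Sum>z\<in>{1..<a}. ?c z y)" by simp
      moreover have "(\<Sum>z\<in>{1..<a}. ?c z y - ?c 0 y) = (\<Sum>z\<in>{1..<a}. ?c z y) - int (a - 1) * ?c 0 y"
        by (simp add: sum_subtractf)
      moreover have "int (a - 1) = int a - 1" using a2 by simp
      ultimately show ?thesis by (simp add: algebra_simps)
    qed
    ultimately show ?thesis by (rule inM_cong[rotated])
  qed
  have c0: "w @ [0] \<in> W" using child_in_W[OF w lw] a2 by simp
  define r where "r = n - Suc (length (w @ [0]))"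
  have r: "n - length (w @ [0]) = Suc r" using lw by (simp add: r_def)
  have R: "inL (\<lambda>y. Q (Suc r) * ?c 0 y - Q r * e (Some w) y)"
    using radial[OF c0] unfolding r r_def[symmetric] by (simp add: par_def)
  have C0: "inM (?c 0)"
  proof -
    have "inM (\<lambda>y. (Q (Suc r) * ?c 0 y - Q r * e (Some w) y) + Q r * e (Some w) y - Q r * (int a * ?c 0 y))"
      by (intro inM_diff inM_add inM_smult inM_inL R eW A)
    then show ?thesis by (rule inM_cong[rotated]) (simp add: Q_Suc' algebra_simps)
  qed
  show ?thesis
  proof (cases "x = 0")
    case True then show ?thesis using C0 by simp
  next
    case False
    have "inM (\<lambda>y. (?c x y - ?c 0 y) + ?c 0 y)" using H[of x] False x by (intro inM_add C0) auto
    then show ?thesis by (rule inM_cong[rotated]) simp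
  qed
qed

lemma gen_aux: "\<forall>w\<in>W. length w \<le> t \<longrightarrow> inM (e (Some w))"
proof (induction t)
  case 0
  have "(n, 0) \<in> I" by (simp add: target_index_def)
  then have "inM (h (n, 0))" by (rule inM_h)
  then have "inM (e (Some []))" by (rule inM_cong[rotated]) (simp add: h_def)
  then show ?case by auto
next
  case (Suc t)
  show ?case
  proof (intro ballI impI)
    fix w' assume w': "w' \<in> W" "length w' \<le> Suc t"
    show "inM (e (Some w'))"
    proof (cases "length w' \<le> t")
      case True then show ?thesis using Suc.IH w' by blast
    next
      case False
      then have l: "length w' = Suc t" using w' by simp
      then obtain w x where wx: "w' = w @ [x]" by (cases w' rule: rev_cases) auto
      have w: "w \<in> W" and x: "x < a" and lw: "length w < n - 2" and lt: "length w = t"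
        using w' wx l by (auto simp: W_def)
      have eW: "inM (e (Some w))" using Suc.IH w lt by blast
      have eP: "inM (e (par w))"
      proof (cases "w = []")
        case True then show ?thesis using inM_inL[OF inL_eNone] by (simp add: par_def)
      next
        case False
        have "butlast w \<in> W" using w by (auto simp: W_def dest: in_set_butlastD)
        moreover have "length (butlast w) \<le> t" using lt by simp
        ultimately show ?thesis using Suc.IH False by (simp add: par_def)
      qed
      show ?thesis unfolding wx by (rule gen_step[OF w lw eW eP x])
    qed
  qed
qed

lemma inM_e: "u \<in> V \<Longrightarrow> inM (e u)"
proof -
  assume u: "u \<in> V"
  show ?thesis
  proof (cases u)
    case None then show ?thesis using inM_inL[OF inL_eNone] by simp
  next
    case (Some w) then show ?thesis using u gen_aux by (auto simp: V_eq)
  qed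
qed

lemma inM_all: "inM x"
proof -
  have "inM (\<lambda>y. \<Sum>u\<in>V. x u * e u y)"
    by (intro inM_sum finite_V inM_smult inM_e)
  then show ?thesis
  proof (rule inM_cong[rotated])
    fix y assume y: "y \<in> V"
    have "(\<Sum>u\<in>V. x u * e u y) = (\<Sum>u\<in>V. if u = y then x y else 0)"
      by (rule sum.cong) (auto simp: e_def)
    then show "(\<Sum>u\<in>V. x u * e u y) = x y" using y finite_V by simp
  qed
qed

lemma diff_in_L: assumes x: "x \<in> carrier ZVV" and x': "x' \<in> carrier ZVV"
  shows "x \<otimes>\<^bsub>ZVV\<^esub> inv\<^bsub>ZVV\<^esub> x' = restrict (\<lambda>y. x y - x' y) V"
  unfolding inv_ZVV[OF x'] mult_ZVV restrict_def by auto

lemma coset_eq: assumes x: "x \<in> carrier ZVV" and x': "x' \<in> carrier ZVV"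
    and d: "inL (\<lambda>y. x y - x' y)"
  shows "L #>\<^bsub>ZVV\<^esub> x = L #>\<^bsub>ZVV\<^esub> x'"
proof -
  have "x \<otimes>\<^bsub>ZVV\<^esub> inv\<^bsub>ZVV\<^esub> x' \<in> L" using d unfolding diff_in_L[OF x x'] inL_def .
  then have "x \<in> L #>\<^bsub>ZVV\<^esub> x'" by (rule subgroup.rcos_module_rev[OF subL grp x' x])
  then show ?thesis using group.repr_independence[OF grp _ x' subL] by simp
qed

lemma coset_eqD: assumes x: "x \<in> carrier ZVV" and x': "x' \<in> carrier ZVV"
    and eq: "L #>\<^bsub>ZVV\<^esub> x = L #>\<^bsub>ZVV\<^esub> x'"
  shows "inL (\<lambda>y. x y - x' y)"
proof -
  have "x \<in> L #>\<^bsub>ZVV\<^esub> x" by (rule group.rcos_self[OF grp x subL])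
  then have "x \<in> L #>\<^bsub>ZVV\<^esub> x'" using eq by simp
  then have "x \<otimes>\<^bsub>ZVV\<^esub> inv\<^bsub>ZVV\<^esub> x' \<in> L" by (rule subgroup.rcos_module_imp[OF subL grp x'])
  then show ?thesis unfolding diff_in_L[OF x x'] inL_def .
qed

abbreviation "TG \<equiv> target_group a n"

lemma qsum_pos: "0 < qsum a k \<longleftrightarrow> 0 < k"
proof -
  have "Q k \<ge> 1 \<longleftrightarrow> k \<ge> 1" using Q_pos[of k] by (cases k) auto
  then show ?thesis by (simp add: Q_qsum Suc_le_eq)
qed

lemma I_fst_pos: "i \<in> I \<Longrightarrow> 0 < fst i"
  using n2 by (auto simp: target_index_def)

lemma carrier_TG: "carrier TG = {t \<in> extensional I. \<forall>i\<in>I. 0 \<le> t i \<and> t i < Q (fst i)}"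
proof -
  have "carrier TG = {t \<in> (\<Pi>\<^sub>E i\<in>I. carrier ((\<lambda>(k, j). integer_mod_group (qsum a k)) i)).
          finite {i \<in> I. t i \<noteq> \<one>\<^bsub>(\<lambda>(k, j). integer_mod_group (qsum a k)) i\<^esub>}}"
    unfolding target_group_def by (rule carrier_sum_group) (auto simp: split: prod.splits)
  also have "\<dots> = {t \<in> extensional I. \<forall>i\<in>I. 0 \<le> t i \<and> t i < Q (fst i)}"
    using finite_I I_fst_pos qsum_pos
    by (auto simp: PiE_def Pi_def carrier_integer_mod_group Q_qsum split: prod.splits intro: finite_subset)
  finally show ?thesis .
qed

lemma mult_TG: "t \<otimes>\<^bsub>TG\<^esub> t' = (\<lambda>i\<in>I. (t i + t' i) mod Q (fst i))"
  unfolding target_group_def by (auto simp: Q_qsum split: prod.splits)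

lemma group_TG: "group TG"
  unfolding target_group_def by (rule sum_group) (auto split: prod.splits)

definition HH :: "(nat \<times> nat \<Rightarrow> int) \<Rightarrow> nat list option \<Rightarrow> int" where
  "HH t = (\<lambda>y\<in>V. \<Sum>i\<in>I. t i * h i y)"

lemma HH_carrier: "HH t \<in> carrier ZVV"
  by (simp add: HH_def carrier_ZVV)

definition psi where "psi t = L #>\<^bsub>ZVV\<^esub> HH t"

lemma inL_mult_h: "inL (\<lambda>y. \<Sum>i\<in>I. (Q (fst i) * k i) * h i y)"
proof (rule inL_sum[OF finite_I])
  fix i assume "i \<in> I"
  from inL_smult[OF inL_qh[OF this], of "k i"]
  show "inL (\<lambda>y. Q (fst i) * k i * h i y)" by (simp add: algebra_simps)
qed

lemma phi_sum_h: "phi f (\<lambda>y. \<Sum>i\<in>I. c i * h i y) = (\<Sum>i\<in>I. c i * phi f (h i))"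
  unfolding phi_def by (simp add: sum_distrib_left sum_distrib_right algebra_simps) (rule sum.swap)

lemma psi_hom: "psi \<in> hom TG (ZVV Mod L)"
proof (rule homI)
  fix t assume "t \<in> carrier TG"
  show "psi t \<in> carrier (ZVV Mod L)"
    unfolding psi_def carrier_FactGroup using HH_carrier by blast
next
  fix t t' assume t: "t \<in> carrier TG" and t': "t' \<in> carrier TG"
  have nL: "L \<lhd> ZVV" by (rule comm_group.subgroup_imp_normal[OF comm subL])
  have "psi t \<otimes>\<^bsub>ZVV Mod L\<^esub> psi t' = L #>\<^bsub>ZVV\<^esub> (HH t \<otimes>\<^bsub>ZVV\<^esub> HH t')"
    unfolding psi_def FactGroup_def by (simp add: normal.rcos_sum[OF nL HH_carrier HH_carrier])
  also have "\<dots> = psi (t \<otimes>\<^bsub>TG\<^esub> t')"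
    unfolding psi_def
  proof (rule coset_eq)
    show "HH t \<otimes>\<^bsub>ZVV\<^esub> HH t' \<in> carrier ZVV" by (simp add: mult_ZVV carrier_ZVV)
    show "HH (t \<otimes>\<^bsub>TG\<^esub> t') \<in> carrier ZVV" by (rule HH_carrier)
    let ?k = "\<lambda>i. (t i + t' i) div Q (fst i)"
    have "inL (\<lambda>y. \<Sum>i\<in>I. (Q (fst i) * ?k i) * h i y)" by (rule inL_mult_h)
    then show "inL (\<lambda>y. (HH t \<otimes>\<^bsub>ZVV\<^esub> HH t') y - HH (t \<otimes>\<^bsub>TG\<^esub> t') y)"
    proof (rule iffD1[OF inL_cong, rotated])
      fix y assume y: "y \<in> V"
      have e1: "(HH t \<otimes>\<^bsub>ZVV\<^esub> HH t') y = (\<Sum>i\<in>I. t i * h i y) + (\<Sum>i\<in>I. t' i * h i y)"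
        using y unfolding mult_ZVV HH_def restrict_def by simp
      have e2: "HH (t \<otimes>\<^bsub>TG\<^esub> t') y = (\<Sum>i\<in>I. ((t i + t' i) mod Q (fst i)) * h i y)"
        using y unfolding HH_def mult_TG by (auto intro!: sum.cong)
      have e3: "(\<Sum>i\<in>I. (Q (fst i) * ?k i) * h i y)
          = (\<Sum>i\<in>I. (t i + t' i - (t i + t' i) mod Q (fst i)) * h i y)"
      proof (rule sum.cong[OF refl])
        fix i
        have "t i + t' i - (t i + t' i) mod Q (fst i) = Q (fst i) * ((t i + t' i) div Q (fst i))"
          by (metis minus_mod_eq_mult_div)
        then show "(Q (fst i) * ?k i) * h i y = (t i + t' i - (t i + t' i) mod Q (fst i)) * h i y"
          by simp
      qed
      have e4: "(\<Sum>i\<in>I. (t i + t' i - (t i + t' i) mod Q (fst i)) * h i y)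
         = (\<Sum>i\<in>I. t i * h i y) + (\<Sum>i\<in>I. t' i * h i y) - (\<Sum>i\<in>I. ((t i + t' i) mod Q (fst i)) * h i y)"
        unfolding left_diff_distrib distrib_right sum_subtractf sum.distrib ..
      show "(\<Sum>i\<in>I. (Q (fst i) * ?k i) * h i y) = (HH t \<otimes>\<^bsub>ZVV\<^esub> HH t') y - HH (t \<otimes>\<^bsub>TG\<^esub> t') y"
        unfolding e1 e2 e3 e4 ..
    qed
  qed
  finally show "psi (t \<otimes>\<^bsub>TG\<^esub> t') = psi t \<otimes>\<^bsub>ZVV Mod L\<^esub> psi t'" by simp
qed

lemma psi_inj: "inj_on psi (carrier TG)"
proof (rule inj_onI)
  fix t t' assume t: "t \<in> carrier TG" and t': "t' \<in> carrier TG" and eq: "psi t = psi t'"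
  let ?c = "\<lambda>i. t i - t' i"
  have "inL (\<lambda>y. HH t y - HH t' y)" using coset_eqD[OF HH_carrier HH_carrier eq[unfolded psi_def]] .
  then have mem: "restrict (\<lambda>y. HH t y - HH t' y) V \<in> L" by (simp add: inL_def)
  show "t = t'"
  proof (rule extensionalityI)
    show "t \<in> extensional I" "t' \<in> extensional I" using t t' unfolding carrier_TG by auto
    fix i assume i: "i \<in> I"
    have "Q (fst i) dvd phi (fI i) (restrict (\<lambda>y. HH t y - HH t' y) V)" by (rule dvd_L[OF i mem])
    also have "phi (fI i) (restrict (\<lambda>y. HH t y - HH t' y) V) = phi (fI i) (\<lambda>y. \<Sum>i'\<in>I. ?c i' * h i' y)"
    proof (rule phi_cong)
      fix y assume y: "y \<in> V"
      have "(\<Sum>i'\<in>I. ?c i' * h i' y) = (\<Sum>i'\<in>I. t i' * h i' y) - (\<Sum>i'\<in>I. t' i' * h i' y)"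
        unfolding left_diff_distrib sum_subtractf ..
      then show "restrict (\<lambda>y. HH t y - HH t' y) V y = (\<Sum>i'\<in>I. ?c i' * h i' y)"
        using y unfolding HH_def restrict_def by simp
    qed
    also have "\<dots> = (\<Sum>i'\<in>I. ?c i' * phi (fI i) (h i'))" by (rule phi_sum_h)
    finally have d1: "Q (fst i) dvd (\<Sum>i'\<in>I. ?c i' * phi (fI i) (h i'))" .
    have d2: "Q (fst i) dvd (\<Sum>i'\<in>I. ?c i' * (phi (fI i) (h i') - (if i = i' then 1 else 0)))"
    proof (rule dvd_sum)
      fix i' assume i': "i' \<in> I"
      show "Q (fst i) dvd ?c i' * (phi (fI i) (h i') - (if i = i' then 1 else 0))"
        by (rule dvd_mult[OF dual[OF i i']])
    qed
    have s3: "(\<Sum>i'\<in>I. ?c i' * (if i = i' then 1 else 0)) = ?c i"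
    proof -
      have "(\<Sum>i'\<in>I. ?c i' * (if i = i' then 1 else 0)) = (\<Sum>i'\<in>I. if i' = i then ?c i' else 0)"
        by (rule sum.cong) auto
      then show ?thesis using i finite_I by simp
    qed
    have "(\<Sum>i'\<in>I. ?c i' * phi (fI i) (h i'))
        = (\<Sum>i'\<in>I. ?c i' * (phi (fI i) (h i') - (if i = i' then 1 else 0))) + ?c i"
    proof -
      have "(\<Sum>i'\<in>I. ?c i' * phi (fI i) (h i'))
        = (\<Sum>i'\<in>I. ?c i' * (phi (fI i) (h i') - (if i = i' then 1 else 0)) + ?c i' * (if i = i' then 1 else 0))"
        by (rule sum.cong) (auto simp: algebra_simps)
      also have "\<dots> = (\<Sum>i'\<in>I. ?c i' * (phi (fI i) (h i') - (if i = i' then 1 else 0)))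
                     + (\<Sum>i'\<in>I. ?c i' * (if i = i' then 1 else 0))"
        by (rule sum.distrib)
      finally show ?thesis unfolding s3 .
    qed
    with d1 have "Q (fst i) dvd (\<Sum>i'\<in>I. ?c i' * (phi (fI i) (h i') - (if i = i' then 1 else 0))) + ?c i"
      by simp
    then have "Q (fst i) dvd ?c i" using dvd_add_right_iff[OF d2] by blast
    then have "t i mod Q (fst i) = t' i mod Q (fst i)" by (simp add: mod_eq_dvd_iff)
    moreover have "0 \<le> t i" "t i < Q (fst i)" "0 \<le> t' i" "t' i < Q (fst i)"
      using t t' i unfolding carrier_TG by auto
    ultimately show "t i = t' i" by simp
  qed
qed

lemma psi_surj: "psi ` carrier TG = carrier (ZVV Mod L)"
proof
  show "psi ` carrier TG \<subseteq> carrier (ZVV Mod L)" using psi_hom by (auto simp: hom_def)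
next
  show "carrier (ZVV Mod L) \<subseteq> psi ` carrier TG"
  proof
    fix CC assume "CC \<in> carrier (ZVV Mod L)"
    then obtain x where x: "x \<in> carrier ZVV" and X: "CC = L #>\<^bsub>ZVV\<^esub> x"
      unfolding carrier_FactGroup by blast
    obtain c where c: "inL (\<lambda>y. x y - (\<Sum>i\<in>I. c i * h i y))" using inM_all[of x] by (auto simp: inM_def)
    define t where "t = (\<lambda>i\<in>I. c i mod Q (fst i))"
    have tc: "t \<in> carrier TG"
    proof -
      have "Q (fst i) > 0" if "i \<in> I" for i using Q_pos[of "fst i"] I_fst_pos[OF that] by simp
      then show ?thesis unfolding carrier_TG t_def by auto
    qed
    have "inL (\<lambda>y. - (x y - (\<Sum>i\<in>I. c i * h i y)) - (\<Sum>i\<in>I. (Q (fst i) * (c i div Q (fst i))) * h i y))"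
      by (rule inL_diff[OF inL_neg[OF c] inL_mult_h])
    then have "inL (\<lambda>y. HH t y - x y)"
    proof (rule iffD1[OF inL_cong, rotated])
      fix y assume y: "y \<in> V"
      have "HH t y = (\<Sum>i\<in>I. (c i - Q (fst i) * (c i div Q (fst i))) * h i y)"
        using y unfolding HH_def t_def by (auto intro!: sum.cong simp: minus_mult_div_eq_mod)
      also have "\<dots> = (\<Sum>i\<in>I. c i * h i y) - (\<Sum>i\<in>I. (Q (fst i) * (c i div Q (fst i))) * h i y)"
        unfolding left_diff_distrib sum_subtractf ..
      finally show "- (x y - (\<Sum>i\<in>I. c i * h i y)) - (\<Sum>i\<in>I. (Q (fst i) * (c i div Q (fst i))) * h i y)
          = HH t y - x y" by simp
    qed
    then have "psi t = CC" unfolding psi_def X by (rule coset_eq[OF HH_carrier x])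
    then show "CC \<in> psi ` carrier TG" using tc by blast
  qed
qed

lemma main: "SP_T d n \<cong> TG"
proof -
  have "psi \<in> iso TG (ZVV Mod L)"
    unfolding iso_def bij_betw_def using psi_hom psi_inj psi_surj by blast
  then have "TG \<cong> ZVV Mod L" unfolding is_iso_def by blast
  then have "ZVV Mod L \<cong> TG" by (rule group.iso_sym[OF group_TG])
  moreover have "SP_T d n = ZVV Mod L"
    by (simp add: SP_T_def sandpile_group_def L_eq[symmetric] ZVV_def)
  ultimately show ?thesis by simp
qed


end

theorem mainTheorem7:
  fixes d n :: nat
  assumes "d \<ge> 3" and "n \<ge> 2"
  shows "SP_T d n \<cong> target_group (d - 1) n"
proof -
  interpret T d n using assms by unfold_locales
  show ?thesis by (rule main)
qed

end
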